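(* For every integer $n \geq 11$ and every integer $k$ with $5\le k\le n+1$, there exists a separating union-closed family $\mathcal{A}^{(k)}$ with base set $[n]$, height $h=k$ and $|\mathcal{B}(\mathcal{A}^{(k)})|=1$ such that \[\mathrm{Avg}(\mathcal{A}^{(k)}) = \frac{\sum_{A \in \mathcal{A}^{(k)}}|A|}{|\mathcal{A}^{(k)}|} < \frac{n}{2}.\]
   Context: A family of sets $\mathcal{A}$ is union-closed if it is a finite family of distinct finite sets with at least one nonempty member set, and $X,Y\in\mathcal{A}$ implies $X\cup Y\in\mathcal{A}$ (the empty set may be a member). For a family $\mathcal{F}$, $b(\mathcal{F})=\bigcup_{F\in\mathcal{F}}F$; the base set $b(\mathcal{A})$ is denoted $[n]=\{1,\dots,n\}$. $\mathcal{A}$ is separating if for any two distinct $x,y\in[n]$ there is $A\in\mathcal{A}$ containing exactly one of $x,y$. A chain in $\mathcal{A}$ is a subfamily any two distinct members of which are comparable under proper inclusion; the height $h$ of $\mathcal{A}$ is the maximum size of a chain in $\mathcal{A}$. For real $x\ge 0$, $\mathcal{A}_{<x}=\{A\in\mathcal{A} : |A|<x\}$. For $\mathcal{S}\subseteq\mathcal{A}$ and $S\in\mathcal{S}$, $\mathrm{irr}_{\mathcal{S}}(S)=\{s\in S : s\notin b(\mathcal{S}\setminus\{S\})\}$, and $\mathcal{S}$ is irredundant if $\mathrm{irr}_{\mathcal{S}}(S)\neq\emptyset$ for every $S\in\mathcal{S}$. Set $B=b(\mathcal{A}_{<n/2})$, and let $\mathcal{B}(\mathcal{A})$ denote any irredundant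 subfamily of $\mathcal{A}_{<n/2}$ of minimum size such that $b(\mathcal{B}(\mathcal{A}))=B$. *)

theory Defs
  imports Complex_Main
begin

definition union_closed :: "'a set set \<Rightarrow> bool" where
  "union_closed \<A> \<longleftrightarrow> finite \<A> \<and> (\<forall>A\<in>\<A>. finite A) \<and> (\<exists>A\<in>\<A>. A \<noteq> {}) \<and>
     (\<forall>X\<in>\<A>. \<forall>Y\<in>\<A>. X \<union> Y \<in> \<A>)"

definition separating :: "'a set set \<Rightarrow> bool" where
  "separating \<A> \<longleftrightarrow> (\<forall>x\<in>\<Union>\<A>. \<forall>y\<in>\<Union>\<A>. x \<noteq> y \<longrightarrow> (\<exists>A\<in>\<A>. (x \<in> A) \<noteq> (y \<in> A)))"

definition is_chain :: "'a set set \<Rightarrow> bool" where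
  "is_chain \<C> \<longleftrightarrow> (\<forall>X\<in>\<C>. \<forall>Y\<in>\<C>. X \<noteq> Y \<longrightarrow> X \<subset> Y \<or> Y \<subset> X)"

definition height :: "'a set set \<Rightarrow> nat" where
  "height \<A> = Max {card \<C> | \<C>. \<C> \<subseteq> \<A> \<and> is_chain \<C>}"

definition below :: "'a set set \<Rightarrow> real \<Rightarrow> 'a set set" where
  "below \<A> x = {A\<in>\<A>. real (card A) < x}"

definition irr :: "'a set set \<Rightarrow> 'a set \<Rightarrow> 'a set" where
  "irr \<S> S = S - \<Union>(\<S> - {S})"

definition irredundant :: "'a set set \<Rightarrow> bool" where
  "irredundant \<S> \<longleftrightarrow> (\<forall>S\<in>\<S>. irr \<S> S \<noteq> {})"

definition B_size :: "'a set set \<Rightarrow> nat" where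
  "B_size \<A> = (let \<S>0 = below \<A> (real (card (\<Union>\<A>)) / 2) in
     Min {card \<S> | \<S>. \<S> \<subseteq> \<S>0 \<and> irredundant \<S> \<and> \<Union>\<S> = \<Union>\<S>0})"

definition avg :: "'a set set \<Rightarrow> real" where
  "avg \<A> = (\<Sum>A\<in>\<A>. real (card A)) / real (card \<A>)"

end

theory Submission
  imports Defs
begin

definition fam :: "nat \<Rightarrow> nat \<Rightarrow> nat \<Rightarrow> nat \<Rightarrow> nat set set" where
  "fam n t s r = (\<lambda>i. {1..i}) ` ({..<s} \<union> {t<..t+r} \<union> {n})
     \<union> {A. A \<subseteq> {1..t} \<and> t - 2 \<le> card A}
     \<union> (\<lambda>y. {1..n} - {y}) ` {t+2..n}"

lemma sum_lt_int: "(\<Sum>i<s. 2 * int i - N) = int s * int s - int s - int s * N"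
  by (induction s) (simp_all add: algebra_simps)

lemma sum_mid_int: "(\<Sum>i\<in>{t<..t+r}. 2 * int i - N) = int r * (2 * int t - N) + int r * (int r + 1)"
proof (induction r)
  case 0 then show ?case by simp
next
  case (Suc r)
  have e: "{t<..t + Suc r} = insert (Suc (t + r)) {t<..t+r}" by auto
  show ?case unfolding e using Suc by (simp add: algebra_simps)
qed

lemma seg_inj: "inj_on (\<lambda>i::nat. {1..i}) X"
proof (rule inj_onI)
  fix i j :: nat assume h: "{1..i} = {1..j}"
  have "card {1..i} = card {1..j}" by (simp only: h)
  then show "i = j" by simp
qed

lemma layer_sum:
  assumes "finite T"
  shows "(\<Sum>A\<in>{A. A \<subseteq> T \<and> card A = j}. (f (card A)::int)) = int (card T choose j) * f j"
proof -
  have "(\<Sum>A\<in>{A. A \<subseteq> T \<and> card A = j}. f (card A)) = (\<Sum>A\<in>{A. A \<subseteq> T \<and> card A = j}. f j)"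
    by (rule sum.cong) auto
  also have "\<dots> = int (card T choose j) * f j" using n_subsets[OF assms] by simp
  finally show ?thesis .
qed

lemma disj_by_card:
  assumes "\<And>A. A \<in> X \<Longrightarrow> P (card A)" "\<And>A. A \<in> Y \<Longrightarrow> Q (card A)" "\<And>c. P c \<Longrightarrow> Q c \<Longrightarrow> False"
  shows "X \<inter> Y = {}"
  using assms by blast

lemma cos_inj: fixes n t :: nat shows "inj_on (\<lambda>y. {1..n} - {y}) {t+2..n}"
proof (rule inj_onI)
  fix y z assume y: "y \<in> {t+2..n}" and z: "z \<in> {t+2..n}" and h: "{1..n} - {y} = {1..n} - {z}"
  show "y = z"
  proof (rule ccontr)
    assume "y \<noteq> z"
    then have yz: "y \<in> {1..n} - {z}" using y by simp
    have "y \<in> {1..n} - {y}" using yz by (simp only: h)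
    then show False by simp
  qed
qed

lemma cos_sum1: fixes n t :: nat
  shows "(\<Sum>y\<in>{t+2..n}. 2 * int (card ({1..n} - {y})) - int n) = (\<Sum>y\<in>{t+2..n}. 2 * int (n - 1) - int n)"
  by (rule sum.cong) (simp_all add: card_Diff_singleton)

lemma cos_sum2: fixes n t :: nat assumes "t + r + 2 \<le> n"
  shows "(\<Sum>y\<in>{t+2..n}. 2 * int (n - 1) - int n) = int (n - (t+2) + 1) * (2 * int (n - 1) - int n)"
  using assms by (simp add: Suc_diff_le)

lemma arith_int:
  fixes T N S R C :: int
  assumes hC: "2 * C = T * (T - 1)" and t5: "5 \<le> T" and hN: "N = 2*T+1 \<or> N = 2*T+2"
    and s0: "0 \<le> S" and sT: "S \<le> T - 2" and r0: "0 \<le> R" and rN: "T + R + 2 \<le> N"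
    and rs: "R = 0 \<or> S = T - 2"
  shows "(S*S - S - S*N) + (R*(2*T - N) + R*(R+1)) + N
    + (C*(2*(T-2) - N) + T*(2*(T-1) - N) + 1*(2*T - N)) + (N-T-1)*(2*(N-1) - N) < 0"
proof -
  define X where "X = (S*S - S - S*N) + (R*(2*T - N) + R*(R+1)) + N
    + (C*(2*(T-2) - N) + T*(2*(T-1) - N) + 1*(2*T - N)) + (N-T-1)*(2*(N-1) - N)"
  have TT: "5 * T \<le> T * T" using t5 by (intro mult_right_mono) auto
  have SS: "S * S \<le> S * N" using s0 sT hN by (intro mult_left_mono) auto
  from hN have "X < 0"
  proof
    assume N: "N = 2*T+1"
    have e: "2 * X
      = 2*(S*S - S - S*N) + 2*(R*R) - T*T + T"
      unfolding X_def N using hC by (simp add: algebra_simps)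
    from rs show ?thesis
    proof
      assume R: "R = 0"
      have "2 * X = 2 * (S * S - S - S * N) - T * T + T" using e unfolding R by simp
      then show ?thesis using TT SS s0 t5 by arith
    next
      assume S: "S = T - 2"
      have RR0: "R * R \<le> (T-1)*(T-1)" using r0 rN N by (intro mult_mono) auto
      have RR: "R * R \<le> T*T - 2*T + 1" using RR0 by (simp add: algebra_simps)
      have "2*(S*S - S - S*N) = -2*(T*T) - 4*T + 16" unfolding S N by (simp add: algebra_simps)
      then show ?thesis using e RR TT t5 by arith
    qed
  next
    assume N: "N = 2*T+2"
    have e: "2 * X
      = 2*(S*S - S - S*N) + 2*(R*R) - 2*R - 2*(T*T) + 6*T"
      unfolding X_def N using hC by (simp add: algebra_simps)
    from rs show ?thesis
    proof
      assume "R = 0" then show ?thesis using e TT SS s0 t5 by arith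
    next
      assume S: "S = T - 2"
      have RR: "R * R \<le> T*T" using r0 rN N by (intro mult_mono) auto
      have RR2: "R * R - R \<le> T*T - T"
      proof -
        show ?thesis
        proof (cases "R = 0")
          case True then show ?thesis using TT t5 by simp
        next
          case False
          have "R * (R - 1) \<le> T * (T - 1)" using r0 rN N False by (intro mult_mono) auto
          then show ?thesis by (simp add: algebra_simps)
        qed
      qed
      have "2*(S*S - S - S*N) = -2*(T*T) - 6*T + 20" unfolding S N by (simp add: algebra_simps)
      then show ?thesis using e RR2 TT t5 by arith
    qed
  qed
  then show ?thesis by (simp add: X_def)
qed

lemma two_choose: "2 * (t choose 2) = t * (t - 1)"
proof -
  have "even (t * (t - 1))" by (cases "even t") auto
  then show ?thesis unfolding choose_two by simp
qed

context
  fixes n t s r :: nat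
  assumes t5: "5 \<le> t" and tn: "2*t < n" and tn2: "n \<le> 2*t+2"
    and s_le: "s + 2 \<le> t" and r_le: "t + r + 2 \<le> n"
begin

lemma fam_union:
  assumes X: "X \<in> fam n t s r" and Y: "Y \<in> fam n t s r"
  shows "X \<union> Y \<in> fam n t s r"
proof -
  let ?I = "{..<s} \<union> {t<..t+r} \<union> {n}"
  have Ile: "i \<le> n" if "i \<in> ?I" for i using that r_le s_le by auto
  have c1: "X \<union> Y \<in> fam n t s r" if "i \<in> ?I" "j \<in> ?I" "X = {1..i}" "Y = {1..j}" for i j
  proof -
    have "X \<union> Y = {1..max i j}" using that by (auto simp: max_def)
    moreover have "max i j \<in> ?I" using that by (auto simp: max_def)
    ultimately show ?thesis unfolding fam_def by blast
  qed
  have c2: "{1..i} \<union> A \<in> fam n t s r" if "i \<in> ?I" "A \<subseteq> {1..t}" "t - 2 \<le> card A" for i A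
  proof (cases "i \<le> t")
    case True
    have "{1..i} \<union> A \<subseteq> {1..t}" using True that by auto
    moreover have "card A \<le> card ({1..i} \<union> A)" using that(2) by (intro card_mono) (auto intro: finite_subset)
    ultimately show ?thesis using that unfolding fam_def by auto
  next
    case False
    then have "{1..i} \<union> A = {1..i}" using that by auto
    then show ?thesis using that unfolding fam_def by auto
  qed
  have c3: "{1..i} \<union> ({1..n} - {y}) \<in> fam n t s r" if "i \<in> ?I" "y \<in> {t+2..n}" for i y
  proof (cases "i < y")
    case True
    then have "{1..i} \<union> ({1..n} - {y}) = {1..n} - {y}" using Ile[OF that(1)] by auto
    then show ?thesis using that unfolding fam_def by auto
  next
    case False
    then have "{1..i} \<union> ({1..n} - {y}) = {1..n}" using Ile[OF that(1)] that by auto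
    then show ?thesis unfolding fam_def by auto
  qed
  have c4: "A \<union> B \<in> fam n t s r" if "A \<subseteq> {1..t}" "t - 2 \<le> card A" "B \<subseteq> {1..t}" for A B
  proof -
    have "card A \<le> card (A \<union> B)" by (intro card_mono) (use that in \<open>auto intro: finite_subset\<close>)
    then show ?thesis using that unfolding fam_def by auto
  qed
  have c5: "A \<union> ({1..n} - {y}) \<in> fam n t s r" if "A \<subseteq> {1..t}" "y \<in> {t+2..n}" for A y
  proof -
    have "A \<union> ({1..n} - {y}) = {1..n} - {y}" using that tn by auto
    then show ?thesis using that unfolding fam_def by auto
  qed
  have c6: "({1..n} - {y}) \<union> ({1..n} - {z}) \<in> fam n t s r" if "y \<in> {t+2..n}" "z \<in> {t+2..n}" for y z
  proof (cases "y = z")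
    case True then show ?thesis using that unfolding fam_def by auto
  next
    case False
    then have "({1..n} - {y}) \<union> ({1..n} - {z}) = {1..n}" by auto
    then show ?thesis unfolding fam_def by auto
  qed
  have memE: "(\<exists>i\<in>?I. Z = {1..i}) \<or> (Z \<subseteq> {1..t} \<and> t - 2 \<le> card Z) \<or> (\<exists>y\<in>{t+2..n}. Z = {1..n} - {y})"
    if "Z \<in> fam n t s r" for Z using that unfolding fam_def by blast
  from memE[OF X] memE[OF Y] show ?thesis
    by (elim disjE bexE conjE; metis c1 c2 c3 c4 c5 c6 Un_commute)
qed

lemma fam_sub: "X \<in> fam n t s r \<Longrightarrow> X \<subseteq> {1..n}"
proof -
  assume "X \<in> fam n t s r"
  then consider (a) i where "i \<in> {..<s} \<union> {t<..t+r} \<union> {n}" "X = {1..i}"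
    | (b) "X \<subseteq> {1..t}" | (c) y where "X = {1..n} - {y}"
    unfolding fam_def by blast
  then show ?thesis
  proof cases
    case a
    then have "i \<le> n" using s_le r_le by auto
    then show ?thesis using a by auto
  next
    case b then show ?thesis using tn by auto
  next
    case c then show ?thesis by auto
  qed
qed

lemma top_in: "{1..n} \<in> fam n t s r"
  unfolding fam_def by (rule UnI1, rule UnI1, rule image_eqI[where x=n]) auto

lemma fam_Union: "\<Union>(fam n t s r) = {1..n}"
  using fam_sub top_in by blast

lemma fam_finite: "finite (fam n t s r)"
proof -
  have "fam n t s r \<subseteq> Pow {1..n}" using fam_sub by blast
  then show ?thesis by (rule finite_subset) simp
qed

lemma layer_in: "A \<subseteq> {1..t} \<Longrightarrow> t - 2 \<le> card A \<Longrightarrow> A \<in> fam n t s r"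
  unfolding fam_def by (intro UnI1 UnI2 CollectI conjI)

lemma cos_in: "t + 2 \<le> y \<Longrightarrow> y \<le> n \<Longrightarrow> {1..n} - {y} \<in> fam n t s r"
  unfolding fam_def by (intro UnI2 imageI) simp

lemma fam_sep: "separating (fam n t s r)"
  unfolding separating_def fam_Union
proof (intro ballI impI)
  fix x y assume x: "x \<in> {1..n}" and y: "y \<in> {1..n}" and xy: "x \<noteq> y"
  have T: "{1..t} \<in> fam n t s r" by (rule layer_in) auto
  show "\<exists>A\<in>fam n t s r. (x \<in> A) \<noteq> (y \<in> A)"
  proof (cases "x \<le> t")
    case xt: True
    show ?thesis
    proof (cases "y \<le> t")
      case True
      have "{1..t} - {x} \<in> fam n t s r" by (rule layer_in) (use xt x in auto)
      then show ?thesis using xt True x y xy by (intro bexI[of _ "{1..t} - {x}"]) auto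
    next
      case False
      then show ?thesis using T xt x by (intro bexI[of _ "{1..t}"]) auto
    qed
  next
    case xt: False
    show ?thesis
    proof (cases "y \<le> t")
      case True
      then show ?thesis using T xt y by (intro bexI[of _ "{1..t}"]) auto
    next
      case yt: False
      show ?thesis
      proof (cases "t + 2 \<le> x")
        case True
        then show ?thesis using cos_in[of x] x y xy by (intro bexI[of _ "{1..n} - {x}"]) auto
      next
        case False
        then have "t + 2 \<le> y" using xt yt xy by auto
        then show ?thesis using cos_in[of y] x y xy by (intro bexI[of _ "{1..n} - {y}"]) auto
      qed
    qed
  qed
qed

lemma fam_uc: "union_closed (fam n t s r)"
  unfolding union_closed_def
proof (intro conjI ballI)
  show "finite (fam n t s r)" by (rule fam_finite)
  show "finite A" if "A \<in> fam n t s r" for A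
    using fam_sub[OF that] finite_subset by blast
  show "\<exists>A\<in>fam n t s r. A \<noteq> {}"
    using top_in tn by (intro bexI[of _ "{1..n}"]) auto
  show "X \<union> Y \<in> fam n t s r" if "X \<in> fam n t s r" "Y \<in> fam n t s r" for X Y
    using fam_union that by blast
qed

lemma card_K: "card ({..<s} \<union> {t-2..t+r} \<union> {n-1..n}) = s + r + 5"
proof -
  have d1: "{..<s} \<inter> {t-2..t+r} = {}" using s_le by auto
  have d2: "({..<s} \<union> {t-2..t+r}) \<inter> {n-1..n} = {}" using s_le r_le by auto
  have "card ({..<s} \<union> {t-2..t+r}) = s + (r + 3)"
    using card_Un_disjoint[OF _ _ d1] t5 by simp
  moreover have "card {n-1..n} = 2" using tn t5 by simp
  ultimately show ?thesis using card_Un_disjoint[OF _ _ d2] by simp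
qed

lemma card_in_K:
  assumes "X \<in> fam n t s r"
  shows "card X \<in> {..<s} \<union> {t-2..t+r} \<union> {n-1..n}"
proof -
  from assms consider (a) i where "i \<in> {..<s} \<union> {t<..t+r} \<union> {n}" "X = {1..i}"
    | (b) "X \<subseteq> {1..t}" "t - 2 \<le> card X" | (c) y where "y \<in> {t+2..n}" "X = {1..n} - {y}"
    unfolding fam_def by blast
  then show ?thesis
  proof cases
    case a then show ?thesis by auto
  next
    case b
    have "card X \<le> card {1..t}" using b by (intro card_mono) auto
    then show ?thesis using b by auto
  next
    case c
    then have "card X = n - 1" by (simp add: card_Diff_singleton)
    then show ?thesis by auto
  qed
qed

lemma seg_in:
  assumes "i \<in> {..<s} \<union> {t-2..t+r} \<union> {n-1..n}"
  shows "{1..i} \<in> fam n t s r"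
proof -
  consider (a) "i < s" | (b) "t - 2 \<le> i" "i \<le> t" | (c) "t < i" "i \<le> t + r" | (d) "i = n - 1" | (e) "i = n"
    using assms by fastforce
  then show ?thesis
  proof cases
    case a show ?thesis unfolding fam_def by (rule UnI1, rule UnI1, rule image_eqI[where x=i]) (use a in auto)
  next
    case b then show ?thesis by (intro layer_in) auto
  next
    case c show ?thesis unfolding fam_def by (rule UnI1, rule UnI1, rule image_eqI[where x=i]) (use c in auto)
  next
    case d
    have "{1..i} = {1..n} - {n}" using d tn by auto
    then show ?thesis using cos_in[of n] tn t5 by simp
  next
    case e then show ?thesis using top_in by simp
  qed
qed

lemma fam_height: "height (fam n t s r) = s + r + 5"
proof -
  let ?K = "{..<s} \<union> {t-2..t+r} \<union> {n-1..n}"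
  let ?M = "{card \<C> | \<C>. \<C> \<subseteq> fam n t s r \<and> is_chain \<C>}"
  have fin: "finite ?M"
  proof -
    have "?M \<subseteq> card ` Pow (fam n t s r)"
    proof
      fix c assume "c \<in> ?M"
      then obtain C where C: "c = card C" "C \<subseteq> fam n t s r" by blast
      show "c \<in> card ` Pow (fam n t s r)" using C by simp
    qed
    then show ?thesis using fam_finite finite_subset by blast
  qed
  have ub: "c \<le> s + r + 5" if "c \<in> ?M" for c
  proof -
    obtain C where C: "c = card C" "C \<subseteq> fam n t s r" "is_chain C" using \<open>c \<in> ?M\<close> by blast
    have inj: "inj_on card C"
    proof (rule inj_onI, rule ccontr)
      fix X Y assume X: "X \<in> C" and Y: "Y \<in> C" and e: "card X = card Y" and ne: "X \<noteq> Y"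
      have fX: "finite X" "finite Y" using X Y C(2) fam_sub finite_subset by blast+
      from C(3) X Y ne have "X \<subset> Y \<or> Y \<subset> X" unfolding is_chain_def by blast
      then show False
      proof
        assume "X \<subset> Y" then have "card X < card Y" by (rule psubset_card_mono[OF fX(2)])
        then show False using e by simp
      next
        assume "Y \<subset> X" then have "card Y < card X" by (rule psubset_card_mono[OF fX(1)])
        then show False using e by simp
      qed
    qed
    have "card ` C \<subseteq> ?K"
    proof (rule image_subsetI)
      fix X assume "X \<in> C" then show "card X \<in> ?K" using C(2) card_in_K by blast
    qed
    then have "card (card ` C) \<le> card ?K" by (rule card_mono[rotated]) simp
    then show ?thesis using C(1) card_image[OF inj] card_K by simp
  qed
  have mem: "s + r + 5 \<in> ?M"
  proof -
    let ?C = "(\<lambda>i. {1..i::nat}) ` ?K"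
    have inj: "inj_on (\<lambda>i. {1..i::nat}) ?K"
    proof (rule inj_onI)
      fix i j :: nat assume h: "{1..i} = {1..j}"
      have "card {1..i} = card {1..j}" by (simp only: h)
      then show "i = j" by simp
    qed
    have sub: "?C \<subseteq> fam n t s r" by (rule image_subsetI) (rule seg_in)
    have ch: "is_chain ?C"
      unfolding is_chain_def
    proof (intro ballI impI)
      fix X Y assume "X \<in> ?C" "Y \<in> ?C" "X \<noteq> Y"
      obtain i where "X = {1..i}" using \<open>X \<in> ?C\<close> by (rule imageE)
      obtain j where "Y = {1..j}" using \<open>Y \<in> ?C\<close> by (rule imageE)
      have "i \<noteq> j" using \<open>X \<noteq> Y\<close> \<open>X = {1..i}\<close> \<open>Y = {1..j}\<close> by auto
      have ps: "{1..a} \<subset> {1..b}" if "a < b" for a b :: nat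
      proof -
        have "{1..a} \<subseteq> {1..b}" using that by simp
        moreover have "b \<in> {1..b}" "b \<notin> {1..a}" using that by simp_all
        ultimately show ?thesis by blast
      qed
      show "X \<subset> Y \<or> Y \<subset> X"
      proof (cases "i < j")
        case True then show ?thesis using ps \<open>X = {1..i}\<close> \<open>Y = {1..j}\<close> by simp
      next
        case False then have "j < i" using \<open>i \<noteq> j\<close> by simp
        then show ?thesis using ps \<open>X = {1..i}\<close> \<open>Y = {1..j}\<close> by simp
      qed
    qed
    have cC: "card ?C = s + r + 5" using card_image[OF inj] card_K by simp
    show ?thesis by (intro CollectI exI[where x="?C"]) (simp only: cC sub ch simp_thms)
  qed
  show ?thesis unfolding height_def
    by (rule Max_eqI[OF fin ub mem])
qed

lemma fam_sum: "(\<Sum>A\<in>fam n t s r. 2 * int (card A) - int n) =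
    (int s * int s - int s - int s * int n) + (int r * (2 * int t - int n) + int r * (int r + 1)) + int n
    + (int (t choose (t-2)) * (2 * int (t-2) - int n) + int (t choose (t-1)) * (2 * int (t-1) - int n)
       + int (t choose t) * (2 * int t - int n))
    + int (n - (t+2) + 1) * (2 * int (n - 1) - int n)"
proof -
  let ?g = "\<lambda>A::nat set. 2 * int (card A) - int n"
  let ?P1 = "(\<lambda>i. {1..i::nat}) ` {..<s}"
  let ?P3 = "(\<lambda>i. {1..i::nat}) ` {t<..t+r}"
  let ?P5 = "{{1..n}}"
  let ?L = "\<lambda>j. {A. A \<subseteq> {1..t} \<and> card A = j}"
  let ?Lay = "{A. A \<subseteq> {1..t} \<and> t - 2 \<le> card A}"
  let ?Cos = "(\<lambda>y. {1..n} - {y}) ` {t+2..n}"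
  have decomp: "fam n t s r = (((?P1 \<union> ?P3) \<union> ?P5) \<union> ?Lay) \<union> ?Cos"
    unfolding fam_def image_Un by simp
  have c1: "card A < t - 2" if "A \<in> ?P1" for A using that s_le by auto
  have c3: "t < card A \<and> card A \<le> t + r" if "A \<in> ?P3" for A using that by auto
  have cL: "t - 2 \<le> card A \<and> card A \<le> t" if "A \<in> ?Lay" for A
  proof -
    have "card A \<le> card {1..t}" using that by (intro card_mono) auto
    then show ?thesis using that by simp
  qed
  have cC: "card A = n - 1" if "A \<in> ?Cos" for A using that by (auto simp: card_Diff_singleton)
  have fL: "finite ?Lay"
  proof -
    have "?Lay \<subseteq> Pow {1..t}" by blast
    then show ?thesis by (rule finite_subset) simp
  qed
  have c5: "card A = n" if "A \<in> ?P5" for A using that by simp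
  have c13: "card A < t - 2 \<or> (t < card A \<and> card A \<le> t + r)" if "A \<in> ?P1 \<union> ?P3" for A
    using that c1 c3 by (elim UnE) blast+
  have c135: "card A < t - 2 \<or> (t < card A \<and> card A \<le> t + r) \<or> card A = n" if "A \<in> (?P1 \<union> ?P3) \<union> ?P5" for A
    using that c13 c5 by (elim UnE) blast+
  have c135L: "card A < t - 2 \<or> (t < card A \<and> card A \<le> t + r) \<or> card A = n \<or> (t - 2 \<le> card A \<and> card A \<le> t)"
    if "A \<in> ((?P1 \<union> ?P3) \<union> ?P5) \<union> ?Lay" for A
    using that c135 cL by (elim UnE) blast+
  have d1: "?P1 \<inter> ?P3 = {}"
    by (rule disj_by_card[where P="\<lambda>c. c < t - 2" and Q="\<lambda>c. t < c \<and> c \<le> t + r", OF c1 c3]) (use r_le tn t5 in auto)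
  have d2: "(?P1 \<union> ?P3) \<inter> ?P5 = {}"
    by (rule disj_by_card[where P="\<lambda>c. c < t - 2 \<or> (t < c \<and> c \<le> t + r)" and Q="\<lambda>c. c = n", OF c13 c5]) (use r_le tn t5 in auto)
  have d3: "((?P1 \<union> ?P3) \<union> ?P5) \<inter> ?Lay = {}"
    by (rule disj_by_card[where P="\<lambda>c. c < t - 2 \<or> (t < c \<and> c \<le> t + r) \<or> c = n" and Q="\<lambda>c. t - 2 \<le> c \<and> c \<le> t", OF c135 cL]) (use r_le tn t5 in auto)
  have d4: "(((?P1 \<union> ?P3) \<union> ?P5) \<union> ?Lay) \<inter> ?Cos = {}"
    by (rule disj_by_card[where P="\<lambda>c. c < t - 2 \<or> (t < c \<and> c \<le> t + r) \<or> c = n \<or> (t - 2 \<le> c \<and> c \<le> t)" and Q="\<lambda>c. c = n - 1", OF c135L cC]) (use r_le tn t5 in auto)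
  have s1: "sum ?g ?P1 = int s * int s - int s - int s * int n"
    using sum.reindex[OF seg_inj[of "{..<s}"], of ?g] sum_lt_int[where s=s and N="int n"] by simp
  have s3: "sum ?g ?P3 = int r * (2 * int t - int n) + int r * (int r + 1)"
    using sum.reindex[OF seg_inj[of "{t<..t+r}"], of ?g] sum_mid_int[where t=t and r=r and N="int n"] by simp
  have s5: "sum ?g ?P5 = int n" by simp
  have layeq: "?Lay = (?L (t-2) \<union> ?L (t-1)) \<union> ?L t"
  proof (intro set_eqI iffI)
    fix A assume "A \<in> ?Lay"
    then have "t - 2 \<le> card A \<and> card A \<le> t" "A \<subseteq> {1..t}" using cL by blast+
    moreover have "card A = t - 2 \<or> card A = t - 1 \<or> card A = t" using calculation(1) t5 by linarith
    ultimately show "A \<in> (?L (t-2) \<union> ?L (t-1)) \<union> ?L t" by blast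
  next
    fix A assume "A \<in> (?L (t-2) \<union> ?L (t-1)) \<union> ?L t"
    then show "A \<in> ?Lay" by auto
  qed
  have fLj: "finite (?L j)" for j
  proof -
    have "?L j \<subseteq> Pow {1..t}" by blast
    then show ?thesis by (rule finite_subset) simp
  qed
  have sL: "sum ?g ?Lay = int (t choose (t-2)) * (2 * int (t-2) - int n) + int (t choose (t-1)) * (2 * int (t-1) - int n)
       + int (t choose t) * (2 * int t - int n)"
  proof -
    have e1: "?L (t-2) \<inter> ?L (t-1) = {}" using t5 by auto
    have e2: "(?L (t-2) \<union> ?L (t-1)) \<inter> ?L t = {}" using t5 by auto
    have lj: "sum ?g (?L j) = int (t choose j) * (2 * int j - int n)" for j
      using layer_sum[of "{1..t}" "\<lambda>c. 2 * int c - int n" j] by simp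
    have "sum ?g ?Lay = sum ?g (?L (t-2) \<union> ?L (t-1)) + sum ?g (?L t)"
      unfolding layeq by (rule sum.union_disjoint[OF finite_UnI[OF fLj fLj] fLj e2])
    also have "sum ?g (?L (t-2) \<union> ?L (t-1)) = sum ?g (?L (t-2)) + sum ?g (?L (t-1))"
      by (rule sum.union_disjoint[OF fLj fLj e1])
    finally have "sum ?g ?Lay = sum ?g (?L (t-2)) + sum ?g (?L (t-1)) + sum ?g (?L t)" .
    also have "\<dots> = int (t choose (t-2)) * (2 * int (t-2) - int n) + int (t choose (t-1)) * (2 * int (t-1) - int n)
       + int (t choose t) * (2 * int t - int n)"
      by (simp only: lj)
    finally show ?thesis .
  qed
  have sC: "sum ?g ?Cos = int (n - (t+2) + 1) * (2 * int (n - 1) - int n)"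
  proof -
    have "sum ?g ?Cos = (\<Sum>y\<in>{t+2..n}. ?g ({1..n} - {y}))" by (simp only: sum.reindex[OF cos_inj] comp_def)
    also have "\<dots> = (\<Sum>y\<in>{t+2..n}. 2 * int (n - 1) - int n)" by (rule cos_sum1)
    also have "\<dots> = int (n - (t+2) + 1) * (2 * int (n - 1) - int n)" using r_le by (rule cos_sum2)
    finally show ?thesis .
  qed
  have f1: "finite ?P1" "finite ?P3" "finite ?P5" "finite ?Cos" by simp_all
  have fU1: "finite (?P1 \<union> ?P3)" using f1 by simp
  have fU2: "finite ((?P1 \<union> ?P3) \<union> ?P5)" using f1 by simp
  have fU3: "finite (((?P1 \<union> ?P3) \<union> ?P5) \<union> ?Lay)" using f1 fL by simp
  have "sum ?g (fam n t s r) = sum ?g (((?P1 \<union> ?P3) \<union> ?P5) \<union> ?Lay) + sum ?g ?Cos"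
    unfolding decomp by (rule sum.union_disjoint[OF fU3 f1(4) d4])
  also have "sum ?g (((?P1 \<union> ?P3) \<union> ?P5) \<union> ?Lay) = sum ?g ((?P1 \<union> ?P3) \<union> ?P5) + sum ?g ?Lay"
    by (rule sum.union_disjoint[OF fU2 fL d3])
  also have "sum ?g ((?P1 \<union> ?P3) \<union> ?P5) = sum ?g (?P1 \<union> ?P3) + sum ?g ?P5"
    by (rule sum.union_disjoint[OF fU1 f1(3) d2])
  also have "sum ?g (?P1 \<union> ?P3) = sum ?g ?P1 + sum ?g ?P3"
    by (rule sum.union_disjoint[OF f1(1) f1(2) d1])
  finally have "sum ?g (fam n t s r) = sum ?g ?P1 + sum ?g ?P3 + sum ?g ?P5 + sum ?g ?Lay + sum ?g ?Cos" .
  then show ?thesis using s1 s3 s5 sL sC by simp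
qed

lemma fam_cases:
  assumes "X \<in> fam n t s r"
  obtains (seg) i where "i \<in> {..<s} \<union> {t<..t+r} \<union> {n}" "X = {1..i}"
    | (lay) "X \<subseteq> {1..t}" "t - 2 \<le> card X"
    | (cos) y where "y \<in> {t+2..n}" "X = {1..n} - {y}"
  using assms unfolding fam_def by blast

lemma fam_B: "B_size (fam n t s r) = 1"
proof -
  let ?F = "fam n t s r"
  let ?S0 = "below ?F (real n / 2)"
  have cu: "real (card (\<Union>?F)) / 2 = real n / 2" using fam_Union by simp
  have below_sub: "A \<subseteq> {1..t}" if "A \<in> ?S0" for A
  proof -
    have AF: "A \<in> ?F" and lt: "real (card A) < real n / 2" using that unfolding below_def by auto
    then have lt2: "2 * card A < n" by linarith
    from AF show ?thesis
    proof (cases rule: fam_cases)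
      case (seg i)
      then have "card A = i" by simp
      then have "i \<le> t" using lt2 tn2 by linarith
      then show ?thesis using seg by auto
    next
      case lay then show ?thesis by simp
    next
      case (cos y)
      then have "card A = n - 1" by (simp add: card_Diff_singleton)
      then show ?thesis using lt2 tn t5 by linarith
    qed
  qed
  have T_in: "{1..t} \<in> ?S0"
  proof -
    have "{1..t} \<in> ?F" by (rule layer_in) auto
    moreover have "real (card {1..t}) < real n / 2" using tn by simp
    ultimately show ?thesis unfolding below_def by simp
  qed
  have U: "\<Union>?S0 = {1..t}" using below_sub T_in by blast
  have finS0: "finite ?S0"
  proof -
    have "?S0 \<subseteq> ?F" unfolding below_def by blast
    then show ?thesis using fam_finite finite_subset by blast
  qed
  let ?M = "{card S | S. S \<subseteq> ?S0 \<and> irredundant S \<and> \<Union>S = \<Union>?S0}"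
  have finM: "finite ?M"
  proof -
    have "?M \<subseteq> card ` Pow ?S0"
    proof
      fix c assume "c \<in> ?M"
      then obtain S where S: "c = card S" "S \<subseteq> ?S0" by blast
      show "c \<in> card ` Pow ?S0" using S by simp
    qed
    then show ?thesis using finS0 finite_subset by blast
  qed
  have lb: "1 \<le> c" if "c \<in> ?M" for c
  proof -
    obtain S where S: "c = card S" "S \<subseteq> ?S0" "\<Union>S = \<Union>?S0" using \<open>c \<in> ?M\<close> by blast
    have "S \<noteq> {}"
    proof
      assume "S = {}"
      then have "\<Union>?S0 = {}" using S(3) by simp
      then show False using U t5 by simp
    qed
    moreover have "finite S" using S(2) finS0 finite_subset by blast
    ultimately show ?thesis using S(1) by (simp add: Suc_le_eq card_gt_0_iff)
  qed
  have mem: "1 \<in> ?M"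
  proof -
    have irr: "irredundant {{1..t}}"
      unfolding irredundant_def irr_def using t5 by simp
    show ?thesis
    proof (intro CollectI exI[where x="{{1..t}}"] conjI)
      show "1 = card {{1..t::nat}}" by simp
      show "{{1..t}} \<subseteq> ?S0" using T_in by blast
      show "irredundant {{1..t}}" by (rule irr)
      show "\<Union>{{1..t}} = \<Union>?S0" using U by simp
    qed
  qed
  have "Min ?M = 1" by (rule Min_eqI[OF finM lb mem])
  then show ?thesis unfolding B_size_def Let_def cu .
qed

lemma fam_avg:
  assumes rs: "r = 0 \<or> s + 2 = t"
  shows "avg (fam n t s r) < real n / 2"
proof -
  let ?F = "fam n t s r"
  have ne: "card ?F > 0" using top_in fam_finite card_gt_0_iff by blast
  have "(\<Sum>A\<in>?F. 2 * int (card A) - int n) < 0"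
  proof -
    have b1: "t choose (t - 2) = t choose 2" by (subst binomial_symmetric) (use t5 in auto)
    have b2: "t choose (t - 1) = t" by (subst binomial_symmetric) (use t5 in auto)
    have hC: "2 * int (t choose (t - 2)) = int t * (int t - 1)"
    proof -
      have "2 * (t choose (t - 2)) = t * (t - 1)" using two_choose b1 by simp
      then have "int (2 * (t choose (t - 2))) = int (t * (t - 1))" by (rule arg_cong)
      then show ?thesis using t5 by (simp add: of_nat_diff)
    qed
    have hN: "int n = 2 * int t + 1 \<or> int n = 2 * int t + 2" using tn tn2 by linarith
    have rs': "int r = 0 \<or> int s = int t - 2" using rs by auto
    have X: "(int s * int s - int s - int s * int n) + (int r * (2 * int t - int n) + int r * (int r + 1)) + int n
      + (int (t choose (t-2)) * (2 * (int t - 2) - int n) + int t * (2 * (int t - 1) - int n) + 1 * (2 * int t - int n))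
      + (int n - int t - 1) * (2 * (int n - 1) - int n) < 0"
      by (rule arith_int[OF hC _ hN _ _ _ _ rs']) (use t5 s_le r_le in auto)
    have e1: "int (t - 2) = int t - 2" "int (t - 1) = int t - 1" "int (n - (t + 2) + 1) = int n - int t - 1"
      "int (n - 1) = int n - 1" using t5 r_le by auto
    show ?thesis unfolding fam_sum e1 b2 using X by simp
  qed
  moreover have "(\<Sum>A\<in>?F. 2 * int (card A) - int n) = 2 * (\<Sum>A\<in>?F. int (card A)) - int n * int (card ?F)"
    by (simp add: sum_subtractf sum_distrib_left algebra_simps)
  ultimately have "2 * (\<Sum>A\<in>?F. int (card A)) - int n * int (card ?F) < 0"
    by simp
  then have "real_of_int (2 * (\<Sum>A\<in>?F. int (card A))) < real_of_int (int n * int (card ?F))"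
    by (simp only: of_int_less_iff)
  then have "2 * (\<Sum>A\<in>?F. real (card A)) < real n * real (card ?F)"
    by simp
  then show ?thesis unfolding avg_def using ne by (simp add: divide_simps)
qed

end


theorem theorem3p2:
  fixes n k :: nat
  assumes "n \<ge> 11" and "5 \<le> k" and "k \<le> n + 1"
  shows "\<exists>\<A> :: nat set set. union_closed \<A> \<and> \<Union>\<A> = {1..n} \<and> separating \<A> \<and>
           height \<A> = k \<and> B_size \<A> = 1 \<and> avg \<A> < real n / 2"
proof -
  define t where "t = (n - 1) div 2"
  have t5: "5 \<le> t" using assms(1) unfolding t_def by presburger
  have tn: "2 * t < n" using assms(1) unfolding t_def by presburger
  have tn2: "n \<le> 2 * t + 2" using assms(1) unfolding t_def by presburger
  obtain s r where s_le: "s + 2 \<le> t" and r_le: "t + r + 2 \<le> n" and rs: "r = 0 \<or> s + 2 = t"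
    and kk: "k = s + r + 5"
  proof (cases "k \<le> t + 3")
    case True
    show ?thesis by (rule that[of "k - 5" 0]) (use True assms tn t5 in auto)
  next
    case False
    show ?thesis by (rule that[of "t - 2" "k - t - 3"]) (use False assms tn t5 in auto)
  qed
  note L = t5 tn tn2 s_le r_le
  show ?thesis
  proof (intro exI[where x="fam n t s r"] conjI)
    show "union_closed (fam n t s r)" by (rule fam_uc[OF L])
    show "\<Union>(fam n t s r) = {1..n}" by (rule fam_Union[OF L])
    show "separating (fam n t s r)" by (rule fam_sep[OF L])
    show "height (fam n t s r) = k" unfolding kk by (rule fam_height[OF L])
    show "B_size (fam n t s r) = 1" by (rule fam_B[OF L])
    show "avg (fam n t s r) < real n / 2" by (rule fam_avg[OF L rs])
  qed
qed

end
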